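(* Let $z>0$ be fixed, $\nu=n-\tfrac12$ with $n\in\mathbb N$, and $G_\nu(z)=zY_\nu'(z)/Y_\nu(z)$. Then for sufficiently large $\nu$, \[ -\nu+\frac{z^2}{2\nu}-\frac{z^2}{6\nu^2}+O\Big(\frac1{\nu^3}\Big)\le G_\nu(z)\le-\nu+\frac{z^2}{2\nu}+\frac{7z^2}{6\nu^2}+O\Big(\frac1{\nu^3}\Big)<0, \] where the $O(\nu^{-3})$ terms are bounded by $C\nu^{-3}$ with $C$ depending on $z$.
   Context: $Y_\nu$ denotes the Bessel function of the second kind of order $\nu$. *)

theory Defs
  imports "HOL-Analysis.Analysis"
begin

text \<open>Bessel function of the first kind (series definition, real argument z > 0),
  with 1/Gamma written as rGamma (which vanishes at the poles of Gamma).\<close>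
definition BesselJ :: "real \<Rightarrow> real \<Rightarrow> real" where
  "BesselJ nu z = (\<Sum>k. (-1)^k / fact k * rGamma (real k + nu + 1) * (z/2) powr (2 * real k + nu))"

text \<open>Bessel function of the second kind for non-integer order nu.\<close>
definition BesselY :: "real \<Rightarrow> real \<Rightarrow> real" where
  "BesselY nu z = (BesselJ nu z * cos (nu * pi) - BesselJ (-nu) z) / sin (nu * pi)"

definition G :: "real \<Rightarrow> real \<Rightarrow> real" where
  "G nu z = z * deriv (BesselY nu) z / BesselY nu z"

end

theory Submission
  imports Defs "HOL-Real_Asymp.Real_Asymp"
begin


definition dd :: "real \<Rightarrow> nat \<Rightarrow> real" where
  "dd nu k = (-1)^k / fact k * rGamma (real k + - nu + 1)"

definition SS :: "real \<Rightarrow> real \<Rightarrow> real" where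
  "SS nu w = (\<Sum>k. dd nu k * w^k)"

definition SS1 :: "real \<Rightarrow> real \<Rightarrow> real" where
  "SS1 nu w = (\<Sum>k. diffs (dd nu) k * w^k)"

lemma div_flip: "(x::real) / (a - b) = - (x / (b - a))"
  by (metis divide_minus_right minus_diff_eq)

lemma div_aux: "(F::real) \<noteq> 0 \<Longrightarrow> c \<noteq> 0 \<Longrightarrow> M \<noteq> 0 \<Longrightarrow>
   (-A)/(c*F) * (-(R/M)) = A/F*R/(c*M)"
  by (simp add: field_simps)

lemma dd_Suc:
  assumes "real k + 1 - nu \<noteq> 0"
  shows "dd nu (Suc k) = dd nu k / ((real k + 1) * (nu - (real k + 1)))"
proof -
  have r: "(real k + 1 - nu) * rGamma (real k + 1 - nu + 1) = rGamma (real k + 1 - nu)"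
    by (rule rGamma_plus1)
  have e1: "real (Suc k) + - nu + 1 = real k + 1 - nu + 1" by simp
  have e2: "real k + - nu + 1 = real k + 1 - nu" by simp
  have g: "rGamma (real (Suc k) + - nu + 1) = rGamma (real k + - nu + 1) / (real k + 1 - nu)"
    using r assms by (simp only: e1 e2) (simp add: field_simps)
  have ne: "nu - (real k + 1) \<noteq> 0" using assms by simp
  have g2: "rGamma (real (Suc k) + - nu + 1) = - (rGamma (real k + - nu + 1) / (nu - (real k + 1)))"
    unfolding g by (rule div_flip)
  have fk: "fact (Suc k) = (real k + 1) * (fact k :: real)" by (simp add: fact_Suc)
  have pk: "(-1::real)^(Suc k) = - ((-1)^k)" by simp
  have c: "real k + 1 \<noteq> 0" by simp
  show ?thesis unfolding dd_def g2 fk pk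
    by (rule div_aux[OF _ c ne]) simp
qed

lemma halfint_dist:
  assumes "nu = real n - 1/2"
  shows "\<bar>nu - real j\<bar> \<ge> 1/2"
proof (cases "j < n")
  case True
  then have "real j + 1 \<le> real n" by simp
  then show ?thesis using assms by simp
next
  case False
  then show ?thesis using assms by simp
qed

lemma halfint_prod:
  assumes "nu = real n - 1/2" "n \<ge> 1" "j \<ge> 1"
  shows "real j * \<bar>nu - real j\<bar> \<ge> nu / 4"
proof (cases "real j \<ge> nu/2")
  case True
  have "nu/4 = (nu/2) * (1/2)" by simp
  also have "\<dots> \<le> real j * \<bar>nu - real j\<bar>"
    using True halfint_dist[OF assms(1), of j] assms
    by (intro mult_mono) auto
  finally show ?thesis .
next
  case False
  have "nu/4 \<le> 1 * (nu/2)" using assms by simp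
  also have "\<dots> \<le> real j * \<bar>nu - real j\<bar>"
    using False assms by (intro mult_mono) auto
  finally show ?thesis .
qed

lemma dd_Suc_bound:
  assumes "nu = real n - 1/2" "n \<ge> 1"
  shows "\<bar>dd nu (Suc k)\<bar> \<le> (4/nu) * \<bar>dd nu k\<bar>"
proof -
  have hd: "\<bar>nu - real (Suc k)\<bar> \<ge> 1/2" by (rule halfint_dist[OF assms(1)])
  have ne: "real k + 1 - nu \<noteq> 0" using hd by auto
  have p: "real (Suc k) * \<bar>nu - real (Suc k)\<bar> \<ge> nu/4"
    by (rule halfint_prod[OF assms]) simp
  have nupos: "nu > 0" using assms by simp
  have "\<bar>dd nu (Suc k)\<bar> = \<bar>dd nu k\<bar> / ((real k + 1) * \<bar>nu - (real k + 1)\<bar>)"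
    unfolding dd_Suc[OF ne] by (simp add: abs_mult)
  also have "\<dots> \<le> \<bar>dd nu k\<bar> / (nu/4)"
    using p nupos by (intro divide_left_mono) (auto simp: add.commute)
  also have "\<dots> = (4/nu) * \<bar>dd nu k\<bar>" by simp
  finally show ?thesis .
qed

lemma dd_bound:
  assumes "nu = real n - 1/2" "n \<ge> 1"
  shows "\<bar>dd nu k\<bar> \<le> \<bar>dd nu 0\<bar> * (4/nu)^k"
proof (induction k)
  case 0 then show ?case by simp
next
  case (Suc k)
  have nupos: "nu > 0" using assms by simp
  have "\<bar>dd nu (Suc k)\<bar> \<le> (4/nu) * \<bar>dd nu k\<bar>" by (rule dd_Suc_bound[OF assms])
  also have "\<dots> \<le> (4/nu) * (\<bar>dd nu 0\<bar> * (4/nu)^k)"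
    using Suc nupos by (intro mult_left_mono) auto
  finally show ?case by (simp add: field_simps)
qed

lemma dd_summable:
  assumes "nu = real n - 1/2" "n \<ge> 1" "\<bar>x\<bar> < nu/4"
  shows "summable (\<lambda>k. dd nu k * x^k)"
proof -
  have nupos: "nu > 0" using assms by simp
  have r: "\<bar>4/nu * \<bar>x\<bar>\<bar> < 1" using assms nupos by (simp add: field_simps abs_mult)
  have s: "summable (\<lambda>k. \<bar>dd nu 0\<bar> * (4/nu * \<bar>x\<bar>)^k)"
    using r by (intro summable_mult summable_geometric) simp
  show ?thesis
  proof (rule summable_comparison_test[OF _ s], intro exI allI impI)
    fix k :: nat
    have "norm (dd nu k * x^k) = \<bar>dd nu k\<bar> * \<bar>x\<bar>^k" by (simp add: abs_mult power_abs)
    also have "\<dots> \<le> (\<bar>dd nu 0\<bar> * (4/nu)^k) * \<bar>x\<bar>^k"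
      by (intro mult_right_mono dd_bound[OF assms(1,2)]) auto
    also have "\<dots> = \<bar>dd nu 0\<bar> * (4/nu * \<bar>x\<bar>)^k" by (simp only: power_mult_distrib mult.assoc)
    finally show "norm (dd nu k * x^k) \<le> \<bar>dd nu 0\<bar> * (4/nu * \<bar>x\<bar>)^k" .
  qed
qed

lemma SS_deriv:
  assumes "nu = real n - 1/2" "n \<ge> 1" "\<bar>w\<bar> < nu/4"
  shows "(SS nu has_real_derivative SS1 nu w) (at w)"
  unfolding SS_def[abs_def] SS1_def
  apply (rule termdiffs_strong'[where K = "nu/4"])
   apply (rule dd_summable[OF assms(1,2)])
   apply simp
  using assms(3) apply simp
  done

lemma dd0_ne:
  assumes "nu = real n - 1/2"
  shows "dd nu 0 \<noteq> 0"
proof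
  assume "dd nu 0 = 0"
  then have "rGamma (- nu + 1) = 0" by (simp add: dd_def)
  then have "- nu + 1 \<in> \<int>\<^sub>\<le>\<^sub>0" by (simp add: rGamma_eq_zero_iff)
  then obtain m where m: "- nu + 1 = - real m" by (auto elim!: nonpos_Ints_cases')
  then have "real (3 + 2*m) = real (2*n)" using assms by simp
  then have "3 + 2*m = 2*n" by (simp only: of_nat_eq_iff)
  then show False by presburger
qed

lemma BesselY_eq:
  assumes "nu = real n - 1/2"
  shows "BesselY nu y = (-1)^n * BesselJ (-nu) y"
proof -
  have a: "nu * pi = real n * pi - pi/2" unfolding assms by (simp add: algebra_simps)
  have s: "sin (nu*pi) = - ((-1)^n)" unfolding a sin_diff by simp
  have c: "cos (nu*pi) = 0" unfolding a cos_diff by simp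
  have "((-1::real)^n) * (-1)^n = 1" by (simp flip: power_mult_distrib)
  then show ?thesis unfolding BesselY_def s c by (simp add: field_simps)
qed

lemma BesselJ_eq:
  assumes "nu = real n - 1/2" "n \<ge> 1" "y > 0" "(y/2)^2 < nu/4"
  shows "BesselJ (-nu) y = (y/2) powr (-nu) * SS nu ((y/2)^2)"
proof -
  have t: "(-1)^k / fact k * rGamma (real k + - nu + 1) * (y/2) powr (2 * real k + - nu)
      = (y/2) powr (-nu) * (dd nu k * ((y/2)^2)^k)" for k
  proof -
    have "(y/2) powr (2 * real k + - nu) = (y/2) powr (real (2*k)) * (y/2) powr (-nu)"
      by (simp only: of_nat_mult of_nat_numeral powr_add)
    also have "\<dots> = ((y/2)^2)^k * (y/2) powr (-nu)"
    proof -
      have yp: "0 < y/2" using assms(3) by simp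
      show ?thesis unfolding powr_realpow[OF yp] power_mult by (rule refl)
    qed
    finally show ?thesis by (simp add: dd_def)
  qed
  have sm: "summable (\<lambda>k. dd nu k * ((y/2)^2)^k)"
    by (rule dd_summable[OF assms(1,2)]) (use assms(4) in simp)
  show ?thesis unfolding BesselJ_def t SS_def
    by (rule suminf_mult[OF sm])
qed



definition a1 :: "real \<Rightarrow> real" where "a1 nu = 1/(nu-1)"
definition a2 :: "real \<Rightarrow> real" where "a2 nu = 1/(2*(nu-1)*(nu-2))"

lemma alg_E: "(D::real) \<noteq> 0 \<Longrightarrow> x*(p*(A+rb)/D - c) = (x*(p*A - c*(D - ra)) + p*(x*rb) - c*(x*ra))/D"
  by (simp add: field_simps)

lemma asym:
  fixes w :: real and r0 r1 :: "nat \<Rightarrow> real"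
  assumes w: "w > 0"
   and b0: "eventually (\<lambda>n. \<bar>r0 n\<bar> \<le> w^3 * (2*(4/(real n - 1/2))^3)) sequentially"
   and b1: "eventually (\<lambda>n. \<bar>r1 n\<bar> \<le> w^2 * (6*(4/(real n - 1/2))^3)) sequentially"
  shows "eventually (\<lambda>n. 1 + a1 (real n - 1/2) * w + a2 (real n - 1/2) * w^2 + r0 n > 1/2 \<and>
    \<bar>2*w*(a1 (real n - 1/2) + 2*a2 (real n - 1/2)*w + r1 n) / (1 + a1 (real n - 1/2) * w + a2 (real n - 1/2) * w^2 + r0 n)
       - 2*w/(real n - 1/2) - 2*w/(real n - 1/2)^2\<bar> \<le> 8*w/(3*(real n - 1/2)^2)) sequentially"
proof -
  define nu where "nu = (\<lambda>n::nat. real n - 1/2)"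
  define D where "D = (\<lambda>n. 1 + a1 (nu n) * w + a2 (nu n) * w^2 + r0 n)"
  define c where "c = (\<lambda>n. 2*w/nu n + 2*w/(nu n)^2)"
  define K where "K = (\<lambda>n. (nu n)^2 * (2*w*(a1 (nu n) + 2*a2 (nu n)*w) - c n * (1 + a1 (nu n) * w + a2 (nu n) * w^2)))"
  have B: "(\<lambda>n. (nu n)^2 * (4/nu n)^3) \<longlonglongrightarrow> 0" unfolding nu_def by real_asymp
  have B': "(\<lambda>n. (4/nu n)^3) \<longlonglongrightarrow> 0" unfolding nu_def by real_asymp
  have t0: "(\<lambda>n. (nu n)^2 * r0 n) \<longlonglongrightarrow> 0"
  proof (rule Lim_null_comparison)
    show "eventually (\<lambda>n. norm ((nu n)^2 * r0 n) \<le> w^3 * 2 * ((nu n)^2 * (4/nu n)^3)) sequentially"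
      using b0 unfolding nu_def
    proof eventually_elim
      case (elim n)
      have "norm ((real n - 1/2)^2 * r0 n) = (real n - 1/2)^2 * \<bar>r0 n\<bar>" by (simp add: abs_mult)
      also have "\<dots> \<le> (real n - 1/2)^2 * (w^3 * (2*(4/(real n - 1/2))^3))"
        by (rule mult_left_mono[OF elim]) simp
      also have "\<dots> = w^3 * 2 * ((real n - 1/2)^2 * (4/(real n - 1/2))^3)" by (simp only: ac_simps)
      finally show ?case .
    qed
    show "(\<lambda>n. w^3 * 2 * ((nu n)^2 * (4/nu n)^3)) \<longlonglongrightarrow> 0"
      using tendsto_mult[OF tendsto_const B, of "w^3*2"] by simp
  qed
  have t1: "(\<lambda>n. (nu n)^2 * r1 n) \<longlonglongrightarrow> 0"
  proof (rule Lim_null_comparison)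
    show "eventually (\<lambda>n. norm ((nu n)^2 * r1 n) \<le> w^2 * 6 * ((nu n)^2 * (4/nu n)^3)) sequentially"
      using b1 unfolding nu_def
    proof eventually_elim
      case (elim n)
      have "norm ((real n - 1/2)^2 * r1 n) = (real n - 1/2)^2 * \<bar>r1 n\<bar>" by (simp add: abs_mult)
      also have "\<dots> \<le> (real n - 1/2)^2 * (w^2 * (6*(4/(real n - 1/2))^3))"
        by (rule mult_left_mono[OF elim]) simp
      also have "\<dots> = w^2 * 6 * ((real n - 1/2)^2 * (4/(real n - 1/2))^3)" by (simp only: ac_simps)
      finally show ?case .
    qed
    show "(\<lambda>n. w^2 * 6 * ((nu n)^2 * (4/nu n)^3)) \<longlonglongrightarrow> 0"
      using tendsto_mult[OF tendsto_const B, of "w^2*6"] by simp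
  qed
  have tr0: "r0 \<longlonglongrightarrow> 0"
  proof (rule Lim_null_comparison)
    show "eventually (\<lambda>n. norm (r0 n) \<le> w^3 * 2 * (4/nu n)^3) sequentially"
      using b0 unfolding nu_def by eventually_elim (simp only: real_norm_def ac_simps)
    show "(\<lambda>n. w^3 * 2 * (4/nu n)^3) \<longlonglongrightarrow> 0"
      using tendsto_mult[OF tendsto_const B', of "w^3*2"] by simp
  qed
  have ta1: "(\<lambda>n. a1 (nu n)) \<longlonglongrightarrow> 0" unfolding nu_def a1_def by real_asymp
  have ta2: "(\<lambda>n. a2 (nu n)) \<longlonglongrightarrow> 0" unfolding nu_def a2_def by real_asymp
  have tD: "D \<longlonglongrightarrow> 1"
    unfolding D_def using tendsto_add[OF tendsto_add[OF tendsto_add[OF tendsto_const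
       tendsto_mult[OF ta1 tendsto_const]] tendsto_mult[OF ta2 tendsto_const]] tr0, of 1 w "w^2"]
    by simp
  have tinv: "(\<lambda>n. 1/nu n) \<longlonglongrightarrow> 0" unfolding nu_def by real_asymp
  have tinv2: "(\<lambda>n. 1/(nu n)^2) \<longlonglongrightarrow> 0" unfolding nu_def by real_asymp
  have tc: "c \<longlonglongrightarrow> 0"
    unfolding c_def using tendsto_add[OF tendsto_mult[OF tendsto_const tinv] tendsto_mult[OF tendsto_const tinv2], of "2*w" "2*w"]
    by simp
  have tK: "K \<longlonglongrightarrow> 0"
    unfolding K_def c_def nu_def a1_def a2_def by (real_asymp simp: algebra_simps)
  define h where "h = (\<lambda>n. (K n + 2*w*((nu n)^2*r1 n) - c n*((nu n)^2*r0 n)) / D n)"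
  have th: "h \<longlonglongrightarrow> 0"
    unfolding h_def
    using tendsto_divide[OF tendsto_diff[OF tendsto_add[OF tK tendsto_mult[OF tendsto_const t1]] tendsto_mult[OF tc t0]] tD]
    by simp
  have e1: "eventually (\<lambda>n. D n > 1/2) sequentially" using order_tendstoD(1)[OF tD, of "1/2"] by simp
  have e2: "eventually (\<lambda>n. h n < 8*w/3) sequentially" using order_tendstoD(2)[OF th, of "8*w/3"] w by simp
  have e3: "eventually (\<lambda>n. h n > -(8*w/3)) sequentially" using order_tendstoD(1)[OF th, of "-(8*w/3)"] w by simp
  have e4: "eventually (\<lambda>n. nu n > 0) sequentially"
    using eventually_ge_at_top[of "1::nat"] by eventually_elim (simp add: nu_def)
  have "eventually (\<lambda>n. D n > 1/2 \<and> \<bar>2*w*(a1 (nu n) + 2*a2 (nu n)*w + r1 n) / D n - c n\<bar> \<le> 8*w/(3*(nu n)^2)) sequentially"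
    using e1 e2 e3 e4
  proof eventually_elim
    case (elim n)
    have Dn: "D n \<noteq> 0" using elim by simp
    have eq: "(nu n)^2 * (2*w*(a1 (nu n) + 2*a2 (nu n)*w + r1 n) / D n - c n) = h n"
      unfolding h_def K_def
      by (subst alg_E[OF Dn, where ra = "r0 n"]) (simp add: D_def)
    have "\<bar>h n\<bar> \<le> 8*w/3" using elim by simp
    then have "(nu n)^2 * \<bar>2*w*(a1 (nu n) + 2*a2 (nu n)*w + r1 n) / D n - c n\<bar> \<le> 8*w/3"
    proof -
      have "(nu n)^2 * \<bar>2*w*(a1 (nu n) + 2*a2 (nu n)*w + r1 n) / D n - c n\<bar> = \<bar>h n\<bar>"
        unfolding eq[symmetric] by (simp add: abs_mult)
      then show ?thesis using \<open>\<bar>h n\<bar> \<le> 8*w/3\<close> by linarith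
    qed
    then have "\<bar>2*w*(a1 (nu n) + 2*a2 (nu n)*w + r1 n) / D n - c n\<bar> \<le> 8*w/3 / (nu n)^2"
      using elim by (simp add: field_simps)
    then show ?case using elim by simp
  qed
  then show ?thesis unfolding D_def c_def nu_def by (simp add: diff_diff_eq)
qed



lemma alg_G: "(s::real) \<noteq> 0 \<Longrightarrow> P \<noteq> 0 \<Longrightarrow> S \<noteq> 0 \<Longrightarrow> z \<noteq> 0 \<Longrightarrow>
  z * (s * ((- nu * (P / (z/2)) * (1/2)) * S + P * (S1 * (z/2)))) / (s * (P * S))
  = - nu + 2 * ((z/2)^2) * S1 / S"
  by (simp add: field_simps power2_eq_square)

lemma G_formula:
  assumes nu: "nu = real n - 1/2" and n: "n \<ge> 1" and z: "z > 0" "z^2 < nu"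
    and S0: "SS nu ((z/2)^2) \<noteq> 0"
  shows "G nu z = - nu + 2*((z/2)^2) * SS1 nu ((z/2)^2) / SS nu ((z/2)^2)"
proof -
  define w where "w = (z/2)^2"
  define P where "P = (z/2) powr (-nu)"
  define f where "f = (\<lambda>y. (-1::real)^n * ((y/2) powr (-nu) * SS nu ((y/2)^2)))"
  have w4: "\<bar>w\<bar> < nu/4" using z unfolding w_def by (simp add: power_divide)
  have h1: "((\<lambda>y::real. y/2) has_real_derivative 1/2) (at z)"
    by (auto intro!: derivative_eq_intros)
  have h2: "((\<lambda>y. (y/2) powr (-nu)) has_real_derivative (-nu * (z/2) powr (-nu - 1)) * (1/2)) (at z)"
    by (rule DERIV_chain2[OF has_real_derivative_powr h1]) (use z in simp)
  have h3: "((\<lambda>y::real. (y/2)^2) has_real_derivative z/2) (at z)"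
    by (auto intro!: derivative_eq_intros)
  have h4: "((\<lambda>y. SS nu ((y/2)^2)) has_real_derivative SS1 nu w * (z/2)) (at z)"
    unfolding w_def by (rule DERIV_chain2[OF SS_deriv[OF nu n] h3]) (use w4 in \<open>simp add: w_def\<close>)
  have hf: "(f has_real_derivative (-1)^n * ((-nu * (z/2) powr (-nu - 1)) * (1/2) * SS nu w + P * (SS1 nu w * (z/2)))) (at z)"
    unfolding f_def
    by (rule DERIV_cong[OF DERIV_cmult[OF DERIV_mult[OF h2 h4], of "(-1)^n"]]) (simp add: P_def w_def)
  have eqf: "f y = BesselY nu y" if "y \<in> {0<..<sqrt nu}" for y
  proof -
    have y: "0 < y" "y < sqrt nu" using that by auto
    have "y^2 < (sqrt nu)^2" by (rule power_strict_mono) (use y in auto)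
    then have "y^2 < nu" using nu n by simp
    then have "(y/2)^2 < nu/4" by (simp add: power_divide)
    then have "BesselJ (-nu) y = (y/2) powr (-nu) * SS nu ((y/2)^2)" by (rule BesselJ_eq[OF nu n y(1)])
    then show ?thesis unfolding f_def BesselY_eq[OF nu] by simp
  qed
  have zin: "z \<in> {0<..<sqrt nu}" using z by (auto intro: real_less_rsqrt)
  have hY: "(BesselY nu has_real_derivative (-1)^n * ((-nu * (z/2) powr (-nu - 1)) * (1/2) * SS nu w + P * (SS1 nu w * (z/2)))) (at z)"
    by (rule has_field_derivative_transform_within_open[OF hf _ zin eqf]) auto
  have Yz: "BesselY nu z = (-1)^n * (P * SS nu w)" using eqf[OF zin] unfolding f_def P_def w_def by simp
  have pp: "(z/2) powr (-nu - 1) = P / (z/2)" unfolding P_def powr_diff using z by simp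
  have Pne: "P \<noteq> 0" unfolding P_def using z by simp
  have "G nu z = z * ((-1)^n * ((-nu * (P / (z/2))) * (1/2) * SS nu w + P * (SS1 nu w * (z/2)))) / ((-1)^n * (P * SS nu w))"
    unfolding G_def DERIV_imp_deriv[OF hY] Yz pp ..
  also have "\<dots> = - nu + 2 * ((z/2)^2) * SS1 nu w / SS nu w"
    by (rule alg_G) (use Pne S0 z in \<open>auto simp: w_def\<close>)
  finally show ?thesis unfolding w_def .
qed



lemma sum_bound:
  fixes f :: "nat \<Rightarrow> real"
  assumes b: "\<And>k. \<bar>f k\<bar> \<le> c * r^k" and r: "0 \<le> r" "r < 1"
  shows "summable f" "\<bar>suminf f\<bar> \<le> c / (1 - r)"
proof -
  have sg: "summable (\<lambda>k. c * r^k)" using r by (intro summable_mult summable_geometric) simp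
  have sa: "summable (\<lambda>k. \<bar>f k\<bar>)"
    by (rule summable_comparison_test[OF _ sg]) (use b in simp)
  show "summable f" by (rule summable_comparison_test[OF _ sg]) (use b in simp)
  have "\<bar>suminf f\<bar> \<le> (\<Sum>k. \<bar>f k\<bar>)" by (rule summable_rabs[OF sa])
  also have "\<dots> \<le> (\<Sum>k. c * r^k)" by (rule suminf_le[OF b sa sg])
  also have "\<dots> = c / (1 - r)" using r by (simp add: suminf_mult suminf_geometric)
  finally show "\<bar>suminf f\<bar> \<le> c / (1 - r)" .
qed

lemma three_pow: "real k + 3 \<le> 3 * 2^k"
proof (induction k)
  case 0 then show ?case by simp
next
  case (Suc k)
  have "(1::real) \<le> 2^k" by simp
  then show ?case using Suc by simp
qed

definition R0 :: "real \<Rightarrow> real \<Rightarrow> real" where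
  "R0 nu w = (\<Sum>k. dd nu (k+3) * w^(k+3)) / dd nu 0"
definition R1 :: "real \<Rightarrow> real \<Rightarrow> real" where
  "R1 nu w = (\<Sum>k. diffs (dd nu) (k+2) * w^(k+2)) / dd nu 0"

lemma decomp:
  assumes nu: "nu = real n - 1/2" and n: "n \<ge> 1" and w: "0 < w" "16*w \<le> nu"
  shows "SS nu w = dd nu 0 * (1 + a1 nu * w + a2 nu * w^2 + R0 nu w)"
    and "SS1 nu w = dd nu 0 * (a1 nu + 2 * a2 nu * w + R1 nu w)"
    and "\<bar>R0 nu w\<bar> \<le> w^3 * (2*(4/nu)^3)"
    and "\<bar>R1 nu w\<bar> \<le> w^2 * (6*(4/nu)^3)"
proof -
  define d0 where "d0 = dd nu 0"
  define q where "q = 4/nu"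
  have nupos: "nu > 0" using nu n by simp
  have qpos: "q > 0" using nupos by (simp add: q_def)
  have qw: "q*w \<le> 1/4" using w nupos by (simp add: q_def field_simps)
  have d0ne: "d0 \<noteq> 0" unfolding d0_def by (rule dd0_ne[OF nu])
  have h1: "\<bar>nu - real (1::nat)\<bar> \<ge> 1/2" by (rule halfint_dist[OF nu])
  have h2: "\<bar>nu - real (2::nat)\<bar> \<ge> 1/2" by (rule halfint_dist[OF nu])
  have ne1: "real 0 + 1 - nu \<noteq> 0" using h1 by auto
  have ne2: "real 1 + 1 - nu \<noteq> 0" using h2 by auto
  have dd1: "dd nu 1 = d0 * a1 nu"
    using dd_Suc[OF ne1] unfolding d0_def a1_def by simp
  have dd2: "dd nu 2 = d0 * a2 nu"
  proof -
    have "dd nu (Suc 1) = dd nu 1 / ((real 1 + 1) * (nu - (real 1 + 1)))" by (rule dd_Suc[OF ne2])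
    then show ?thesis unfolding dd1 a1_def a2_def by (simp add: numeral_2_eq_2 field_simps)
  qed
  have dq: "\<bar>dd nu k\<bar> \<le> \<bar>d0\<bar> * q^k" for k unfolding d0_def q_def by (rule dd_bound[OF nu n])
  have w4: "\<bar>w\<bar> < nu/4" using w by simp
  have smS: "summable (\<lambda>k. dd nu k * w^k)" by (rule dd_summable[OF nu n w4])
  have smS1: "summable (\<lambda>k. diffs (dd nu) k * w^k)"
    by (rule termdiff_converges[where K = "nu/4"]) (use w4 dd_summable[OF nu n] in auto)
  have "SS nu w = (\<Sum>k. dd nu (k+3) * w^(k+3)) + (\<Sum>i<3. dd nu i * w^i)"
    unfolding SS_def by (rule suminf_split_initial_segment[OF smS])
  also have "(\<Sum>i<3. dd nu i * w^i) = d0 + dd nu 1 * w + dd nu 2 * w^2"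
    by (simp add: numeral_3_eq_3 d0_def power2_eq_square) (simp add: numeral_2_eq_2)
  finally show "SS nu w = dd nu 0 * (1 + a1 nu * w + a2 nu * w^2 + R0 nu w)"
    unfolding R0_def dd1 dd2 using d0ne by (simp add: d0_def field_simps)
  have "SS1 nu w = (\<Sum>k. diffs (dd nu) (k+2) * w^(k+2)) + (\<Sum>i<2. diffs (dd nu) i * w^i)"
    unfolding SS1_def by (rule suminf_split_initial_segment[OF smS1])
  also have "(\<Sum>i<2. diffs (dd nu) i * w^i) = dd nu 1 + 2 * dd nu 2 * w"
    by (simp add: numeral_2_eq_2 diffs_def)
  finally show "SS1 nu w = dd nu 0 * (a1 nu + 2 * a2 nu * w + R1 nu w)"
    unfolding R1_def dd1 dd2 using d0ne by (simp add: d0_def field_simps)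
  have b0: "\<bar>dd nu (k+3) * w^(k+3)\<bar> \<le> (\<bar>d0\<bar> * (q*w)^3) * (q*w)^k" for k
  proof -
    have "\<bar>dd nu (k+3) * w^(k+3)\<bar> = \<bar>dd nu (k+3)\<bar> * w^(k+3)" using w by (simp add: abs_mult)
    also have "\<dots> \<le> (\<bar>d0\<bar> * q^(k+3)) * w^(k+3)" using w by (intro mult_right_mono dq) auto
    also have "\<dots> = (\<bar>d0\<bar> * (q*w)^3) * (q*w)^k" by (simp add: power_add power_mult_distrib)
    finally show ?thesis .
  qed
  have s0: "\<bar>\<Sum>k. dd nu (k+3) * w^(k+3)\<bar> \<le> (\<bar>d0\<bar> * (q*w)^3) / (1 - q*w)"
    by (rule sum_bound(2)[OF b0]) (use qw qpos w in auto)
  also have "\<dots> \<le> (\<bar>d0\<bar> * (q*w)^3) / (1/2)"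
    using qw qpos w by (intro divide_left_mono) auto
  finally have "\<bar>\<Sum>k. dd nu (k+3) * w^(k+3)\<bar> \<le> \<bar>d0\<bar> * (w^3 * (2*q^3))" by (simp add: power_mult_distrib ac_simps)
  then show "\<bar>R0 nu w\<bar> \<le> w^3 * (2*(4/nu)^3)"
    unfolding R0_def using d0ne by (simp add: d0_def[symmetric] q_def abs_div divide_le_eq mult.commute)
  have b1: "\<bar>diffs (dd nu) (k+2) * w^(k+2)\<bar> \<le> (3 * \<bar>d0\<bar> * q^3 * w^2) * (2*q*w)^k" for k
  proof -
    have "\<bar>diffs (dd nu) (k+2) * w^(k+2)\<bar> = (real k + 3) * \<bar>dd nu (k+3)\<bar> * w^(k+2)"
    proof -
      have e: "k + 3 = Suc (Suc (Suc k))" "k + 2 = Suc (Suc k)" by simp_all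
      show ?thesis unfolding e diffs_def using w by (simp add: abs_mult)
    qed
    also have "\<dots> \<le> (3 * 2^k) * (\<bar>d0\<bar> * q^(k+3)) * w^(k+2)"
      using w three_pow[of k] by (intro mult_right_mono mult_mono dq) auto
    also have "\<dots> = (3 * \<bar>d0\<bar> * q^3 * w^2) * (2*q*w)^k" by (simp add: power_add power_mult_distrib power2_eq_square)
    finally show ?thesis .
  qed
  have "\<bar>\<Sum>k. diffs (dd nu) (k+2) * w^(k+2)\<bar> \<le> (3 * \<bar>d0\<bar> * q^3 * w^2) / (1 - 2*q*w)"
    by (rule sum_bound(2)[OF b1]) (use qw qpos w in auto)
  also have "\<dots> \<le> (3 * \<bar>d0\<bar> * q^3 * w^2) / (1/2)"
    using qw qpos w by (intro divide_left_mono) auto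
  finally have "\<bar>\<Sum>k. diffs (dd nu) (k+2) * w^(k+2)\<bar> \<le> \<bar>d0\<bar> * (w^2 * (6*q^3))" by (simp add: ac_simps)
  then show "\<bar>R1 nu w\<bar> \<le> w^2 * (6*(4/nu)^3)"
    unfolding R1_def using d0ne by (simp add: d0_def[symmetric] q_def abs_div divide_le_eq mult.commute)
qed



lemma cancel_d: "(d::real) \<noteq> 0 \<Longrightarrow> 2*w*(d*X)/(d*Y) = 2*w*X/Y"
  by simp

theorem lemmaE3:
  fixes z :: real
  assumes "z > 0"
  shows "\<exists>C N. \<forall>n::nat \<ge> N.
     (let nu = real n - 1/2 in
        - nu + z^2/(2*nu) - z^2/(6*nu^2) - C/nu^3 \<le> G nu z
      \<and> G nu z \<le> - nu + z^2/(2*nu) + 7*z^2/(6*nu^2) + C/nu^3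
      \<and> - nu + z^2/(2*nu) + 7*z^2/(6*nu^2) + C/nu^3 < 0)"
proof -
  define w where "w = (z/2)^2"
  have wpos: "w > 0" using assms by (simp add: w_def)
  have z2: "z^2 = 4*w" by (simp add: w_def power_divide)
  have zz: "0 \<le> z^2" by simp
  define r0 where "r0 = (\<lambda>n::nat. R0 (real n - 1/2) w)"
  define r1 where "r1 = (\<lambda>n::nat. R1 (real n - 1/2) w)"
  have evn: "eventually (\<lambda>n. real n \<ge> 4*z^2 + 3) sequentially"
    using eventually_ge_at_top[of "nat \<lceil>4*z^2 + 3\<rceil>"]
    by eventually_elim (meson le_nat_iff le_of_int_ceiling of_nat_le_iff order_trans real_nat_ceiling_ge)
  have cond: "n \<ge> 1 \<and> 16*w \<le> real n - 1/2 \<and> z^2 < real n - 1/2" if "real n \<ge> 4*z^2 + 3" for n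
  proof -
    have "real n \<ge> 1" using that zz by linarith
    then show ?thesis using that z2 by (auto simp: zero_le_power2)
  qed
  have b0: "eventually (\<lambda>n. \<bar>r0 n\<bar> \<le> w^3 * (2*(4/(real n - 1/2))^3)) sequentially"
    using evn by eventually_elim (use cond decomp(3)[OF refl _ wpos] in \<open>auto simp: r0_def\<close>)
  have b1: "eventually (\<lambda>n. \<bar>r1 n\<bar> \<le> w^2 * (6*(4/(real n - 1/2))^3)) sequentially"
    using evn by eventually_elim (use cond decomp(4)[OF refl _ wpos] in \<open>auto simp: r1_def\<close>)
  have ev: "eventually (\<lambda>n. real n \<ge> 4*z^2 + 3 \<and> 1 + a1 (real n - 1/2) * w + a2 (real n - 1/2) * w^2 + r0 n > 1/2 \<and>
    \<bar>2*w*(a1 (real n - 1/2) + 2*a2 (real n - 1/2)*w + r1 n) / (1 + a1 (real n - 1/2) * w + a2 (real n - 1/2) * w^2 + r0 n)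
       - 2*w/(real n - 1/2) - 2*w/(real n - 1/2)^2\<bar> \<le> 8*w/(3*(real n - 1/2)^2)) sequentially"
    using asym[OF wpos b0 b1] evn by eventually_elim simp
  then obtain N where N: "\<And>n. n \<ge> N \<Longrightarrow> real n \<ge> 4*z^2 + 3 \<and> 1 + a1 (real n - 1/2) * w + a2 (real n - 1/2) * w^2 + r0 n > 1/2 \<and>
    \<bar>2*w*(a1 (real n - 1/2) + 2*a2 (real n - 1/2)*w + r1 n) / (1 + a1 (real n - 1/2) * w + a2 (real n - 1/2) * w^2 + r0 n)
       - 2*w/(real n - 1/2) - 2*w/(real n - 1/2)^2\<bar> \<le> 8*w/(3*(real n - 1/2)^2)"
    unfolding eventually_sequentially by blast
  show ?thesis
  proof (intro exI allI impI)
    fix n :: nat assume "n \<ge> N"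
    note Nn = N[OF this]
    define nu where "nu = real n - 1/2"
    define D where "D = 1 + a1 nu * w + a2 nu * w^2 + R0 nu w"
    have c: "n \<ge> 1" "16*w \<le> nu" "z^2 < nu" using cond[of n] Nn unfolding nu_def by auto
    have nu1: "nu \<ge> 4*z^2 + 5/2" using Nn unfolding nu_def by simp
    have Dpos: "D > 1/2" using Nn unfolding D_def nu_def r0_def by simp
    have E: "\<bar>2*w*(a1 nu + 2*a2 nu*w + R1 nu w) / D - 2*w/nu - 2*w/nu^2\<bar> \<le> 8*w/(3*nu^2)"
      using Nn unfolding D_def nu_def r0_def r1_def by simp
    have d0: "dd nu 0 \<noteq> 0" by (rule dd0_ne[OF nu_def])
    have SSe: "SS nu w = dd nu 0 * D" unfolding D_def by (rule decomp(1)[OF nu_def c(1) wpos c(2)])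
    have SS1e: "SS1 nu w = dd nu 0 * (a1 nu + 2 * a2 nu * w + R1 nu w)" by (rule decomp(2)[OF nu_def c(1) wpos c(2)])
    have S0: "SS nu ((z/2)^2) \<noteq> 0" using d0 Dpos unfolding SSe w_def[symmetric] by simp
    have "G nu z = - nu + 2*w * SS1 nu w / SS nu w"
      using G_formula[OF nu_def c(1) assms c(3) S0] unfolding w_def .
    also have "\<dots> = - nu + 2*w*(a1 nu + 2*a2 nu*w + R1 nu w) / D"
      unfolding SSe SS1e using cancel_d[OF d0] by simp
    finally have Gf: "G nu z = - nu + 2*w*(a1 nu + 2*a2 nu*w + R1 nu w) / D" .
    have nupos: "nu > 0" using nu1 zz by linarith
    have q1: "z^2/(2*nu) = 2*w/nu" unfolding z2 by simp
    have q2: "z^2/(6*nu^2) = 8*w/(3*nu^2) - 2*w/nu^2" unfolding z2 using nupos by (simp add: field_simps)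
    have q3: "7*z^2/(6*nu^2) = 8*w/(3*nu^2) + 2*w/nu^2" unfolding z2 using nupos by (simp add: field_simps)
    have i1: "- nu + z^2/(2*nu) - z^2/(6*nu^2) - 0/nu^3 \<le> G nu z"
      using E unfolding Gf q1 q2 by (simp add: abs_le_iff)
    have i2: "G nu z \<le> - nu + z^2/(2*nu) + 7*z^2/(6*nu^2) + 0/nu^3"
      using E unfolding Gf q1 q3 by (simp add: abs_le_iff)
    have nuge1: "nu \<ge> 1" using nu1 zz by linarith
    have j1: "z^2/(2*nu) \<le> z^2/2"
      using nuge1 by (intro divide_left_mono) auto
    have "1 \<le> nu^2" using nuge1 by (simp add: one_le_power)
    then have j2: "7*z^2/(6*nu^2) \<le> 7*z^2/6"
      by (intro divide_left_mono) auto
    have i3: "- nu + z^2/(2*nu) + 7*z^2/(6*nu^2) + 0/nu^3 < 0"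
      using j1 j2 nu1 zz by linarith
    show "let nu = real n - 1/2 in
        - nu + z^2/(2*nu) - z^2/(6*nu^2) - 0/nu^3 \<le> G nu z
      \<and> G nu z \<le> - nu + z^2/(2*nu) + 7*z^2/(6*nu^2) + 0/nu^3
      \<and> - nu + z^2/(2*nu) + 7*z^2/(6*nu^2) + 0/nu^3 < 0"
      unfolding Let_def nu_def[symmetric] using i1 i2 i3 by blast
  qed
qed


end
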